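(* Let $\mathcal L>0$, $m_\pm>0$, $\rho_\pm>0$, $S_+<0<S_-$, $\lambda_\pm=\sqrt{\rho_\pm/m_\pm}$, and $S_I=0$. Consider the ODE system $\dot q_1=\mathcal H_1^{\rm p}(q_1,q_2)$, $\dot q_2=\mathcal H_2^{\rm p}(q_1,q_2)$ with \[ \mathcal H_1^{\rm p}(q_1,q_2)=\tfrac12\Big(-\tfrac{S_+}{\rho_+}m_+\lambda_+\tanh\big(\lambda_+\tfrac{q_2-q_1}{2}\big)-\tfrac{S_-}{\rho_-}m_-\lambda_-\tanh(\lambda_-q_1)-S_I\Big), \] \[ \mathcal H_2^{\rm p}(q_1,q_2)=\tfrac12\Big(\tfrac{S_+}{\rho_+}m_+\lambda_+\tanh\big(\lambda_+\tfrac{q_2-q_1}{2}\big)+\tfrac{S_-}{\rho_-}m_-\lambda_-\tanh(\lambda_-(\mathcal L-q_2))+S_I\Big), \] the function \[ \mathcal E(q_1,q_2)=\frac{\frac{S_-}{\rho_-}m_-}{2}\ln\cosh(\lambda_-q_1)+\frac{\frac{S_-}{\rho_-}m_-}{2}\ln\cosh(\lambda_-(\mathcal L-q_2))-\frac{S_+}{\rho_+}m_+\ln\cosh\Big(\lambda_+\frac{q_2-q_1}{2}\Big)+\frac12S_I(q_1-q_2), \] and the set $\mathcal T=\{(q_1,q_2)\in\mathbb R^2: 0\le q_2\le\mathcal L,\ 0\le q_1\le q_2\}$. Then the system admits a unique symmetric stationary solution $(q_1^\star,q_2^\star)$, with $q_1^\star=\mathcal L-q_2^\star\in(0,\mathcal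 L/2)$, which is the global minimum of $\mathcal E$ on $\mathcal T$. Moreover, every solution with initial data $(q_1(0),q_2(0))\in\mathcal T$ converges to $(q_1^\star,q_2^\star)$ as $t\to\infty$.
   Context: A symmetric stationary solution is a pair $(q_1^\star,q_2^\star)$ with $\mathcal H_1^{\rm p}(q_1^\star,q_2^\star)=\mathcal H_2^{\rm p}(q_1^\star,q_2^\star)=0$ and $q_1^\star=\mathcal L-q_2^\star$. *)

theory Defs
  imports Complex_Main
begin

definition H1p :: "real \<Rightarrow> real \<Rightarrow> real \<Rightarrow> real \<Rightarrow> real \<Rightarrow> real \<Rightarrow> real \<Rightarrow> real \<Rightarrow> real \<Rightarrow> real \<Rightarrow> real" where
  "H1p L mp mm rp rm Sp Sm SI q1 q2 =
     (1/2) * ( - (Sp / rp) * mp * sqrt (rp / mp) * tanh (sqrt (rp / mp) * ((q2 - q1) / 2))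
               - (Sm / rm) * mm * sqrt (rm / mm) * tanh (sqrt (rm / mm) * q1)
               - SI)"

definition H2p :: "real \<Rightarrow> real \<Rightarrow> real \<Rightarrow> real \<Rightarrow> real \<Rightarrow> real \<Rightarrow> real \<Rightarrow> real \<Rightarrow> real \<Rightarrow> real \<Rightarrow> real" where
  "H2p L mp mm rp rm Sp Sm SI q1 q2 =
     (1/2) * ( (Sp / rp) * mp * sqrt (rp / mp) * tanh (sqrt (rp / mp) * ((q2 - q1) / 2))
               + (Sm / rm) * mm * sqrt (rm / mm) * tanh (sqrt (rm / mm) * (L - q2))
               + SI)"

definition Ep :: "real \<Rightarrow> real \<Rightarrow> real \<Rightarrow> real \<Rightarrow> real \<Rightarrow> real \<Rightarrow> real \<Rightarrow> real \<Rightarrow> real \<Rightarrow> real \<Rightarrow> real" where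
  "Ep L mp mm rp rm Sp Sm SI q1 q2 =
       ((Sm / rm) * mm / 2) * ln (cosh (sqrt (rm / mm) * q1))
     + ((Sm / rm) * mm / 2) * ln (cosh (sqrt (rm / mm) * (L - q2)))
     - (Sp / rp) * mp * ln (cosh (sqrt (rp / mp) * ((q2 - q1) / 2)))
     + (1/2) * SI * (q1 - q2)"

definition Tset :: "real \<Rightarrow> (real \<times> real) set" where
  "Tset L = {(q1, q2). 0 \<le> q2 \<and> q2 \<le> L \<and> 0 \<le> q1 \<and> q1 \<le> q2}"

definition sym_stationary :: "real \<Rightarrow> real \<Rightarrow> real \<Rightarrow> real \<Rightarrow> real \<Rightarrow> real \<Rightarrow> real \<Rightarrow> real \<Rightarrow> real \<Rightarrow> real \<Rightarrow> bool" where
  "sym_stationary L mp mm rp rm Sp Sm SI q1 q2 \<longleftrightarrow>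
     H1p L mp mm rp rm Sp Sm SI q1 q2 = 0 \<and> H2p L mp mm rp rm Sp Sm SI q1 q2 = 0 \<and> q1 = L - q2"

end

theory Submission
  imports Defs
begin

lemma tanh_diff_real: "tanh (x::real) - tanh y = sinh (x - y) / (cosh x * cosh y)"
proof -
  have "cosh x > 0" "cosh y > 0" by (auto intro: cosh_real_pos)
  then show ?thesis by (simp add: tanh_def sinh_diff field_simps)
qed

lemma sinh_ge_self: assumes "(z::real) \<ge> 0" shows "z \<le> sinh z"
proof -
  have "(\<lambda>z. sinh z - z) 0 \<le> (\<lambda>z. sinh z - z) z"
  proof (rule DERIV_nonneg_imp_nondecreasing[OF assms])
    fix t :: real assume "0 \<le> t" "t \<le> z"
    show "\<exists>y. ((\<lambda>z. sinh z - z) has_real_derivative y) (at t) \<and> 0 \<le> y"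
      by (rule exI[of _ "cosh t - 1"]) (auto intro!: derivative_eq_intros simp: cosh_real_ge_1)
  qed
  then show ?thesis by simp
qed

lemma z_sinh: "(z::real)^2 \<le> z * sinh z"
proof (cases "z \<ge> 0")
  case True
  then show ?thesis using sinh_ge_self[OF True] by (simp add: power2_eq_square mult_left_mono)
next
  case False
  have "-z \<le> sinh (-z)" using sinh_ge_self[of "-z"] False by simp
  then have "sinh z \<le> z" by simp
  then show ?thesis using False by (simp add: power2_eq_square mult_left_mono_neg)
qed

lemma key_mono:
  fixes k x y :: real assumes "k > 0"
  shows "k * (x - y)^2 / (cosh (k*x) * cosh (k*y)) \<le> (x - y) * (tanh (k*x) - tanh (k*y))"
proof -
  have cp: "cosh (k*x) * cosh (k*y) > 0" by (simp add: cosh_real_pos)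
  have "(k*(x-y))^2 \<le> (k*(x-y)) * sinh (k*(x-y))" by (rule z_sinh)
  then have "k * (k * (x-y)^2) \<le> k * ((x-y) * sinh (k*x - k*y))"
    by (simp add: power2_eq_square algebra_simps)
  then have "k * (x-y)^2 \<le> (x-y) * sinh (k*x - k*y)" using assms by simp
  then show ?thesis using cp
    by (simp add: tanh_diff_real divide_right_mono)
qed

lemma key_nonneg:
  fixes k x y :: real assumes "k > 0"
  shows "0 \<le> (x - y) * (tanh (k*x) - tanh (k*y))"
proof -
  have "0 \<le> k * (x - y)^2 / (cosh (k*x) * cosh (k*y))" using assms
    by (simp add: cosh_real_pos less_imp_le)
  then show ?thesis using key_mono[OF assms, of x y] by linarith
qed

lemma cosh_le_bound: assumes "\<bar>x::real\<bar> \<le> M" shows "cosh x \<le> cosh M"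
proof -
  have "cosh x = cosh \<bar>x\<bar>" by (cases "x \<ge> 0") auto
  also have "\<dots> \<le> cosh M" using assms by (subst cosh_real_nonneg_le_iff) auto
  finally show ?thesis .
qed

lemma key_bound:
  fixes k x y C :: real assumes "k > 0" "cosh (k*x) \<le> C" "cosh (k*y) \<le> C"
  shows "k * (x - y)^2 / C^2 \<le> (x - y) * (tanh (k*x) - tanh (k*y))"
proof -
  have p1: "cosh (k*x) > 0" "cosh (k*y) > 0" by (auto simp: cosh_real_pos)
  have p2: "cosh (k*x) * cosh (k*y) > 0" using p1 by simp
  have "C > 0" using p1 assms by linarith
  then have p3: "C^2 > 0" by simp
  have "0 \<le> C" using p1 assms by linarith
  then have "cosh (k*x) * cosh (k*y) \<le> C * C"
    using mult_mono[OF assms(2,3)] p1 by auto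
  then have "cosh (k*x) * cosh (k*y) \<le> C^2" by (simp add: power2_eq_square)
  moreover have "0 \<le> k * (x-y)^2" using assms by simp
  ultimately have "k * (x - y)^2 / C^2 \<le> k * (x - y)^2 / (cosh (k*x) * cosh (k*y))"
    by (intro divide_left_mono) (use p2 p3 in auto)
  with key_mono[OF assms(1)] show ?thesis by (meson order.trans)
qed

lemma lncosh_tangent: "ln (cosh x) + tanh x * (y - x) \<le> ln (cosh (y::real))"
proof -
  define g where "g = (\<lambda>z. ln (cosh z) - tanh x * z)"
  have d: "(g has_real_derivative (tanh z - tanh x)) (at z)" for z
    unfolding g_def by (auto intro!: derivative_eq_intros simp: cosh_real_pos tanh_def)
  have "g x \<le> g y"
  proof (cases "x \<le> y")
    case True
    show ?thesis
    proof (rule DERIV_nonneg_imp_nondecreasing[OF True])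
      fix z assume "x \<le> z" "z \<le> y"
      then show "\<exists>D. (g has_real_derivative D) (at z) \<and> 0 \<le> D" using d[of z] by auto
    qed
  next
    case False
    show ?thesis
    proof (rule DERIV_nonpos_imp_nonincreasing[of y x g])
      fix z assume "y \<le> z" "z \<le> x"
      then show "\<exists>D. (g has_real_derivative D) (at z) \<and> D \<le> 0" using d[of z] by auto
    qed (use False in auto)
  qed
  then show ?thesis unfolding g_def by (simp add: algebra_simps)
qed

lemma mono_from_deriv:
  fixes f f' :: "real \<Rightarrow> real"
  assumes "\<And>t. t \<ge> 0 \<Longrightarrow> (f has_real_derivative f' t) (at t within {0..})"
    and "\<And>t. t \<ge> 0 \<Longrightarrow> f' t \<le> 0" and "t \<ge> 0"
  shows "f t \<le> f 0"
proof (rule DERIV_nonpos_imp_decreasing_open[OF assms(3)])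
  fix s :: real assume s: "0 < s" "s < t"
  have "(f has_real_derivative f' s) (at s within {0<..})"
    using assms(1)[of s] s by (rule_tac DERIV_subset) auto
  then have "(f has_real_derivative f' s) (at s)"
    using s at_within_open[of s "{0<..}"] by auto
  then show "\<exists>y. (f has_real_derivative y) (at s) \<and> y \<le> 0" using assms(2)[of s] s by auto
next
  show "continuous_on {0..t} f"
    by (rule DERIV_continuous_on[where D=f']) (auto intro: DERIV_subset assms(1))
qed

lemma exp_decay: assumes "c > 0" shows "((\<lambda>t. K * exp (- c * t)) \<longlongrightarrow> (0::real)) at_top"
proof -
  have "((\<lambda>t. exp (- c * t)) \<longlongrightarrow> 0) at_top"
  proof (rule filterlim_compose[OF exp_at_bot])
    show "filterlim (\<lambda>t. - c * t) at_bot at_top"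
      by (rule filterlim_tendsto_neg_mult_at_bot[OF tendsto_const]) (use assms in \<open>auto intro: filterlim_ident\<close>)
  qed
  from tendsto_mult_left[OF this, of K] show ?thesis by simp
qed


lemma alg_ident: fixes a b u v x L Ts Tu Tv T1 T2 :: real shows
 "2*(u - x)*((a*Ts - b*Tu)/2) + 2*(v - (L-x))*((b*Tv - a*Ts)/2) = -(2*a*((v-u)/2 - ((L-x)-x)/2)*(Ts - T2) + b*(u-x)*(Tu - T1) + b*((L-v)-x)*(Tv-T1)) - (a*T2 - b*T1)*((v-(L-x)) - (u-x))"
  by (simp add: field_simps)

theorem proposition4p3:
  fixes L mp mm rp rm Sp Sm SI :: real
  assumes "L > 0" and "mp > 0" and "mm > 0" and "rp > 0" and "rm > 0"
    and "Sp < 0" and "0 < Sm" and "SI = 0"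
  shows "\<exists>q1s q2s.
     sym_stationary L mp mm rp rm Sp Sm SI q1s q2s
   \<and> (\<forall>a b. sym_stationary L mp mm rp rm Sp Sm SI a b \<longrightarrow> a = q1s \<and> b = q2s)
   \<and> 0 < q1s \<and> q1s < L / 2
   \<and> (q1s, q2s) \<in> Tset L
   \<and> (\<forall>(a, b) \<in> Tset L. Ep L mp mm rp rm Sp Sm SI q1s q2s \<le> Ep L mp mm rp rm Sp Sm SI a b)
   \<and> (\<forall>q1 q2 :: real \<Rightarrow> real.
        (q1 0, q2 0) \<in> Tset L
      \<and> (\<forall>t\<ge>0. (q1 has_real_derivative H1p L mp mm rp rm Sp Sm SI (q1 t) (q2 t)) (at t within {0..})
               \<and> (q2 has_real_derivative H2p L mp mm rp rm Sp Sm SI (q1 t) (q2 t)) (at t within {0..}))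
      \<longrightarrow> (q1 \<longlongrightarrow> q1s) at_top \<and> (q2 \<longlongrightarrow> q2s) at_top)"
proof -
  define lp where "lp = sqrt (rp/mp)"
  define lm where "lm = sqrt (rm/mm)"
  define A where "A = -(Sp/rp)*mp"
  define B where "B = (Sm/rm)*mm"
  define a where "a = A*lp"
  define b where "b = B*lm"
  have lp: "lp > 0" "lm > 0" using assms by (auto simp: lp_def lm_def)
  have AB: "A > 0" "B > 0" using assms by (auto simp: A_def B_def divide_neg_pos mult_neg_pos)
  have ab: "a > 0" "b > 0" using lp AB by (auto simp: a_def b_def)
  have H1: "H1p L mp mm rp rm Sp Sm SI u v = (a * tanh (lp*((v-u)/2)) - b * tanh (lm*u))/2" for u v
    by (simp add: H1p_def a_def b_def A_def B_def lp_def lm_def assms(8) algebra_simps)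
  have H2: "H2p L mp mm rp rm Sp Sm SI u v = (b * tanh (lm*(L-v)) - a * tanh (lp*((v-u)/2)))/2" for u v
    by (simp add: H2p_def a_def b_def A_def B_def lp_def lm_def assms(8) algebra_simps)
  have E: "Ep L mp mm rp rm Sp Sm SI u v = (B/2)*ln(cosh(lm*u)) + (B/2)*ln(cosh(lm*(L-v))) + A*ln(cosh(lp*((v-u)/2)))" for u v
    by (simp add: Ep_def A_def B_def lp_def lm_def assms(8) algebra_simps)
  define F where "F z = b*tanh(lm*z) - a*tanh(lp*(((L-z)-z)/2))" for z
  have Fmono: "F u < F v" if "u < v" for u v
  proof -
    have "tanh (lm*u) < tanh (lm*v)" using that lp by simp
    moreover have "tanh(lp*(((L-v)-v)/2)) < tanh(lp*(((L-u)-u)/2))" using that lp by simp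
    ultimately show ?thesis unfolding F_def using ab
      by (smt (verit) mult_strict_left_mono)
  qed
  have Fcont: "continuous_on {0..L/2} F" unfolding F_def
    by (intro continuous_intros) (auto simp: cosh_real_pos)
  have F0: "F 0 < 0" using ab lp assms(1) by (simp add: F_def)
  have FL: "F (L/2) > 0" using ab lp assms(1) by (simp add: F_def)
  obtain x where x0: "0 \<le> x" "x \<le> L/2" "F x = 0"
    using IVT'[of F 0 0 "L/2", OF _ _ _ Fcont] F0 FL assms(1) by auto
  have x: "0 < x" "x < L/2" using x0 F0 FL by (auto simp: order.order_iff_strict)
  define T1 where "T1 = tanh (lm*x)"
  define T2 where "T2 = tanh (lp*(((L-x)-x)/2))"
  have bal: "b*T1 = a*T2" using x0(3) by (simp add: F_def T1_def T2_def)
  have Finj: "F u = 0 \<Longrightarrow> u = x" for u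
    using Fmono[of u x] Fmono[of x u] x0(3) by (cases "u < x"; cases "x < u") auto
  have stat: "sym_stationary L mp mm rp rm Sp Sm SI u v \<longleftrightarrow> v = L - u \<and> F u = 0" for u v
  proof
    assume "sym_stationary L mp mm rp rm Sp Sm SI u v"
    then show "v = L - u \<and> F u = 0" unfolding sym_stationary_def H1 H2 F_def by auto
  next
    assume "v = L - u \<and> F u = 0"
    then show "sym_stationary L mp mm rp rm Sp Sm SI u v" unfolding sym_stationary_def H1 H2 F_def by auto
  qed
  have Emin: "Ep L mp mm rp rm Sp Sm SI x (L-x) \<le> Ep L mp mm rp rm Sp Sm SI p1 p2" for p1 p2
  proof -
    have i1: "ln (cosh (lm*x)) + T1*(lm*p1 - lm*x) \<le> ln (cosh (lm*p1))"
      unfolding T1_def by (rule lncosh_tangent)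
    have i2: "ln (cosh (lm*x)) + T1*(lm*(L-p2) - lm*x) \<le> ln (cosh (lm*(L-p2)))"
      unfolding T1_def by (rule lncosh_tangent)
    have i3: "ln (cosh (lp*(((L-x)-x)/2))) + T2*(lp*((p2-p1)/2) - lp*(((L-x)-x)/2)) \<le> ln (cosh (lp*((p2-p1)/2)))"
      unfolding T2_def by (rule lncosh_tangent)
    have eq0: "(B/2)*(T1*(lm*p1 - lm*x)) + (B/2)*(T1*(lm*(L-p2) - lm*x)) + A*(T2*(lp*((p2-p1)/2) - lp*(((L-x)-x)/2))) = 0"
    proof -
      have "(B/2)*(T1*(lm*p1 - lm*x)) + (B/2)*(T1*(lm*(L-p2) - lm*x)) + A*(T2*(lp*((p2-p1)/2) - lp*(((L-x)-x)/2)))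
          = (b*T1)/2*(p1 - x + L - p2 - x) + (a*T2)/2*(p2 - p1 - L + x + x)"
        unfolding a_def b_def by (simp add: field_simps)
      also have "\<dots> = 0" using bal by (simp add: algebra_simps)
      finally show ?thesis .
    qed
    have j1: "(B/2)*(ln (cosh (lm*x)) + T1*(lm*p1 - lm*x)) \<le> (B/2)*ln (cosh (lm*p1))"
      using i1 AB by (intro mult_left_mono) auto
    have j2: "(B/2)*(ln (cosh (lm*x)) + T1*(lm*(L-p2) - lm*x)) \<le> (B/2)*ln (cosh (lm*(L-p2)))"
      using i2 AB by (intro mult_left_mono) auto
    have j3: "A*(ln (cosh (lp*(((L-x)-x)/2))) + T2*(lp*((p2-p1)/2) - lp*(((L-x)-x)/2))) \<le> A*ln (cosh (lp*((p2-p1)/2)))"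
      using i3 AB by (intro mult_left_mono) auto
    show ?thesis unfolding E using j1 j2 j3 eq0 by (simp add: algebra_simps)
  qed
  have conv: "(q1 \<longlongrightarrow> x) at_top \<and> (q2 \<longlongrightarrow> L - x) at_top"
    if der: "\<forall>t\<ge>0. (q1 has_real_derivative H1p L mp mm rp rm Sp Sm SI (q1 t) (q2 t)) (at t within {0..})
               \<and> (q2 has_real_derivative H2p L mp mm rp rm Sp Sm SI (q1 t) (q2 t)) (at t within {0..})"
    for q1 q2 :: "real \<Rightarrow> real"
  proof -
    define V where "V t = (q1 t - x)^2 + (q2 t - (L-x))^2" for t
    define V' where "V' t = 2*(q1 t - x)*H1p L mp mm rp rm Sp Sm SI (q1 t) (q2 t)
                          + 2*(q2 t - (L-x))*H2p L mp mm rp rm Sp Sm SI (q1 t) (q2 t)" for t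
    have dV: "(V has_real_derivative V' t) (at t within {0..})" if "t \<ge> 0" for t
    proof -
      have d1: "(q1 has_real_derivative H1p L mp mm rp rm Sp Sm SI (q1 t) (q2 t)) (at t within {0..})"
        and d2: "(q2 has_real_derivative H2p L mp mm rp rm Sp Sm SI (q1 t) (q2 t)) (at t within {0..})"
        using der that by auto
      show ?thesis unfolding V_def[abs_def] V'_def
        by (rule derivative_eq_intros d1 d2 refl | simp add: algebra_simps)+
    qed
    have ident: "V' t = -(2*a*((q2 t - q1 t)/2 - ((L-x)-x)/2)*(tanh (lp*((q2 t - q1 t)/2)) - tanh (lp*(((L-x)-x)/2)))
                   + b*(q1 t - x)*(tanh (lm*q1 t) - tanh (lm*x))
                   + b*((L - q2 t) - x)*(tanh (lm*(L - q2 t)) - tanh (lm*x)))" for t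
    proof -
      have "V' t = -(2*a*((q2 t - q1 t)/2 - ((L-x)-x)/2)*(tanh (lp*((q2 t - q1 t)/2)) - T2)
                   + b*(q1 t - x)*(tanh (lm*q1 t) - T1)
                   + b*((L - q2 t) - x)*(tanh (lm*(L - q2 t)) - T1))
             - (a*T2 - b*T1) * ((q2 t - (L-x)) - (q1 t - x))"
        unfolding V'_def H1 H2 by (rule alg_ident)
      then show ?thesis using bal by (simp add: T1_def T2_def)
    qed
    have nn1: "0 \<le> 2*a*((q2 t - q1 t)/2 - ((L-x)-x)/2)*(tanh (lp*((q2 t - q1 t)/2)) - tanh (lp*(((L-x)-x)/2)))" for t
      using key_nonneg[OF lp(1), of "(q2 t - q1 t)/2" "((L-x)-x)/2"] ab
      by (simp add: mult.assoc)
    have nn2: "0 \<le> b*(q1 t - x)*(tanh (lm*q1 t) - tanh (lm*x))" for t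
      using key_nonneg[OF lp(2), of "q1 t" x] ab by (simp add: mult.assoc)
    have nn3: "0 \<le> b*((L - q2 t) - x)*(tanh (lm*(L - q2 t)) - tanh (lm*x))" for t
      using key_nonneg[OF lp(2), of "L - q2 t" x] ab by (simp add: mult.assoc)
    have V'np: "V' t \<le> 0" for t
      using ident[of t] nn1[of t] nn2[of t] nn3[of t] by linarith
    have Vdec: "V t \<le> V 0" if "t \<ge> 0" for t
      by (rule mono_from_deriv[of V V']) (use dV V'np that in auto)
    define R where "R = sqrt (V 0)"
    define M where "M = lm * (x + R)"
    define C where "C = cosh M"
    define c where "c = b * lm / C^2"
    have Cpos: "C > 0" by (simp add: C_def cosh_real_pos)
    have cpos: "c > 0" using ab lp Cpos by (simp add: c_def)
    have bnd: "\<bar>q1 t - x\<bar> \<le> R" "\<bar>q2 t - (L-x)\<bar> \<le> R" if "t \<ge> 0" for t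
    proof -
      have "(q1 t - x)^2 \<le> V 0" "(q2 t - (L-x))^2 \<le> V 0"
        using Vdec[OF that] zero_le_power2[of "q1 t - x"] zero_le_power2[of "q2 t - (L-x)"]
        unfolding V_def by linarith+
      then show "\<bar>q1 t - x\<bar> \<le> R" "\<bar>q2 t - (L-x)\<bar> \<le> R"
        unfolding R_def by (auto intro: real_le_rsqrt)
    qed
    have cb: "cosh (lm * q1 t) \<le> C" "cosh (lm * x) \<le> C" "cosh (lm * (L - q2 t)) \<le> C" if "t \<ge> 0" for t
    proof -
      have R0: "R \<ge> 0" by (simp add: R_def V_def)
      have "\<bar>q1 t\<bar> \<le> x + R" "\<bar>L - q2 t\<bar> \<le> x + R" using bnd[OF that] x by auto
      then have "\<bar>lm * q1 t\<bar> \<le> M" "\<bar>lm * (L - q2 t)\<bar> \<le> M" "\<bar>lm * x\<bar> \<le> M"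
        using lp R0 x by (auto simp: M_def abs_mult intro!: mult_left_mono)
      then show "cosh (lm * q1 t) \<le> C" "cosh (lm * x) \<le> C" "cosh (lm * (L - q2 t)) \<le> C"
        unfolding C_def by (auto intro: cosh_le_bound)
    qed
    have Vstrong: "V' t + c * V t \<le> 0" if "t \<ge> 0" for t
    proof -
      have k1: "lm * (q1 t - x)^2 / C^2 \<le> (q1 t - x)*(tanh (lm*q1 t) - tanh (lm*x))"
        using key_bound[OF lp(2) cb(1)[OF that] cb(2)[OF that]] .
      have k2: "lm * ((L - q2 t) - x)^2 / C^2 \<le> ((L - q2 t) - x)*(tanh (lm*(L - q2 t)) - tanh (lm*x))"
        using key_bound[OF lp(2) cb(3)[OF that] cb(2)[OF that]] .
      have m1: "b * (lm * (q1 t - x)^2 / C^2) \<le> b*(q1 t - x)*(tanh (lm*q1 t) - tanh (lm*x))"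
        using mult_left_mono[OF k1, of b] ab by (simp add: mult.assoc)
      have m2: "b * (lm * ((L - q2 t) - x)^2 / C^2) \<le> b*((L - q2 t) - x)*(tanh (lm*(L - q2 t)) - tanh (lm*x))"
        using mult_left_mono[OF k2, of b] ab by (simp add: mult.assoc)
      have cV: "c * V t = b * (lm * (q1 t - x)^2 / C^2) + b * (lm * ((L - q2 t) - x)^2 / C^2)"
      proof -
        have sq: "((L - q2 t) - x)^2 = (q2 t - (L-x))^2" by (simp add: power2_eq_square algebra_simps)
        show ?thesis unfolding sq c_def V_def by (simp add: distrib_left add_divide_distrib)
      qed
      show ?thesis using ident[of t] nn1[of t] m1 m2 cV by linarith
    qed
    define W where "W t = V t * exp (c * t)" for t
    define W' where "W' t = (V' t + c * V t) * exp (c * t)" for t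
    have dW: "(W has_real_derivative W' t) (at t within {0..})" if "t \<ge> 0" for t
      unfolding W_def[abs_def] W'_def
      by (rule derivative_eq_intros dV[OF that] refl | simp add: algebra_simps)+
    have W'np: "W' t \<le> 0" if "t \<ge> 0" for t
      unfolding W'_def using Vstrong[OF that] by (simp add: mult_nonpos_nonneg)
    have Vexp: "V t \<le> V 0 * exp (- c * t)" if "t \<ge> 0" for t
    proof -
      have "W t \<le> W 0" by (rule mono_from_deriv[of W W']) (use dW W'np that in auto)
      then have "V t * exp (c*t) \<le> V 0" by (simp add: W_def)
      then have "V t * exp (c*t) * exp (-c*t) \<le> V 0 * exp (-c*t)" by (intro mult_right_mono) auto
      then show ?thesis by (simp add: mult.assoc flip: exp_add)
    qed
    have lim0: "((\<lambda>t. sqrt (V 0 * exp (- c * t))) \<longlongrightarrow> 0) at_top"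
      using tendsto_real_sqrt[OF exp_decay[OF cpos, of "V 0"]] by simp
    have ev: "eventually (\<lambda>t. \<bar>q1 t - x\<bar> \<le> sqrt (V 0 * exp (- c * t)) \<and> \<bar>q2 t - (L-x)\<bar> \<le> sqrt (V 0 * exp (- c * t))) at_top"
      using eventually_ge_at_top[of 0]
    proof eventually_elim
      case (elim t)
      have "(q1 t - x)^2 \<le> V 0 * exp (- c * t)" "(q2 t - (L-x))^2 \<le> V 0 * exp (- c * t)"
        using Vexp[OF elim] zero_le_power2[of "q1 t - x"] zero_le_power2[of "q2 t - (L-x)"]
        unfolding V_def by linarith+
      then show ?case by (auto intro: real_le_rsqrt)
    qed
    have "((\<lambda>t. norm (q1 t - x)) \<longlongrightarrow> 0) at_top" unfolding real_norm_def
      by (rule tendsto_sandwich[OF _ _ tendsto_const lim0]) (use ev in \<open>auto elim: eventually_mono\<close>)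
    then have l1: "(q1 \<longlongrightarrow> x) at_top"
      by (rule LIM_zero_cancel[OF tendsto_norm_zero_cancel])
    have "((\<lambda>t. norm (q2 t - (L-x))) \<longlongrightarrow> 0) at_top" unfolding real_norm_def
      by (rule tendsto_sandwich[OF _ _ tendsto_const lim0]) (use ev in \<open>auto elim: eventually_mono\<close>)
    then have l2: "(q2 \<longlongrightarrow> L - x) at_top"
      by (rule LIM_zero_cancel[OF tendsto_norm_zero_cancel])
    show ?thesis using l1 l2 by simp
  qed
  have c1: "sym_stationary L mp mm rp rm Sp Sm SI x (L - x)" using stat x0 by simp
  have c2: "\<forall>a' b'. sym_stationary L mp mm rp rm Sp Sm SI a' b' \<longrightarrow> a' = x \<and> b' = L - x"
    using stat Finj by auto
  have c3: "(x, L - x) \<in> Tset L" using x by (auto simp: Tset_def)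
  have c4: "\<forall>(p1, p2) \<in> Tset L. Ep L mp mm rp rm Sp Sm SI x (L - x) \<le> Ep L mp mm rp rm Sp Sm SI p1 p2"
    using Emin by auto
  show ?thesis
    by (rule exI[of _ x], rule exI[of _ "L - x"]) (use c1 c2 c3 c4 x conv in blast)
qed

end
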